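(* Let $\mathcal{X}$ be a feature space, $p(\boldsymbol{x},y)$ a joint density on $\mathcal{X}\times\{+1,-1\}$ with class priors $\pi_+=p(y=+1)\in(0,1)$, $\pi_-=1-\pi_+$ and class-conditional densities $p_+,p_-$. Let $\ell:\mathbb{R}\times\{+1,-1\}\to\mathbb{R}_+$ be a loss function and $f:\mathcal{X}\to\mathbb{R}$ a classifier with classification risk $$R(f)=\mathbb{E}_{p(\boldsymbol{x},y)}[\ell(f(\boldsymbol{x}),y)]=\pi_+\mathbb{E}_{p_+(\boldsymbol{x})}[\ell(f(\boldsymbol{x}),+1)]+\pi_-\mathbb{E}_{p_-(\boldsymbol{x})}[\ell(f(\boldsymbol{x}),-1)].$$ Define $$\widetilde{p}_+(\boldsymbol{x})=\frac{\pi_+}{\pi_-^2+\pi_+}p_+(\boldsymbol{x})+\frac{\pi_-^2}{\pi_-^2+\pi_+}p_-(\boldsymbol{x}),\qquad \widetilde{p}_-(\boldsymbol{x})=\frac{\pi_+^2}{\pi_+^2+\pi_-}p_+(\boldsymbol{x})+\frac{\pi_-}{\pi_+^2+\pi_-}p_-(\boldsymbol{x}).$$ Then $R(f)=R_{\mathrm{PC}}(f)$, where $$R_{\mathrm{PC}}(f)=\mathbb{E}_{\widetilde{p}_+(\boldsymbol{x})}\big[\ell(f(\boldsymbol{x}),+1)-\pi_+\ell(f(\boldsymbol{x}),-1)\big]+\mathbb{E}_{\widetilde{p}_-(\boldsymbol{x}')}\big[\ell(f(\boldsymbol{x}'),-1)-\pi_-\ell(f(\boldsymbol{x}'),+1)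\big].$$
   Context: $\widetilde{p}_+$ and $\widetilde{p}_-$ are the marginal densities of the first and second components of pairwise comparison data, i.e. pairs $(\boldsymbol{x},\boldsymbol{x}')$ of unlabeled points generated by drawing two labeled points independently from $p(\boldsymbol{x},y)$ and conditioning on their labels lying in $\{(+1,+1),(+1,-1),(-1,-1)\}$. *)

theory Defs
  imports "HOL-Analysis.Analysis"
begin

text \<open>Feature space: a measure space M (base measure for the densities).
  Labels +1 / -1 are represented as the integers 1 and -1.
  Expectation of g under a density q w.r.t. M.\<close>
definition expect_dens :: "'a measure \<Rightarrow> ('a \<Rightarrow> real) \<Rightarrow> ('a \<Rightarrow> real) \<Rightarrow> real" where
  "expect_dens M q g = (\<integral>x. q x * g x \<partial>M)"

definition is_density :: "'a measure \<Rightarrow> ('a \<Rightarrow> real) \<Rightarrow> bool" where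
  "is_density M q \<longleftrightarrow> q \<in> borel_measurable M \<and> (\<forall>x\<in>space M. 0 \<le> q x)
      \<and> integrable M q \<and> (\<integral>x. q x \<partial>M) = 1"

definition risk :: "'a measure \<Rightarrow> real \<Rightarrow> ('a \<Rightarrow> real) \<Rightarrow> ('a \<Rightarrow> real)
    \<Rightarrow> (real \<Rightarrow> int \<Rightarrow> real) \<Rightarrow> ('a \<Rightarrow> real) \<Rightarrow> real" where
  "risk M pip pp pn l f =
     pip * expect_dens M pp (\<lambda>x. l (f x) 1) + (1 - pip) * expect_dens M pn (\<lambda>x. l (f x) (-1))"

definition ptilde_pos :: "real \<Rightarrow> ('a \<Rightarrow> real) \<Rightarrow> ('a \<Rightarrow> real) \<Rightarrow> 'a \<Rightarrow> real" where
  "ptilde_pos pip pp pn x =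
     pip / ((1 - pip)^2 + pip) * pp x + (1 - pip)^2 / ((1 - pip)^2 + pip) * pn x"

definition ptilde_neg :: "real \<Rightarrow> ('a \<Rightarrow> real) \<Rightarrow> ('a \<Rightarrow> real) \<Rightarrow> 'a \<Rightarrow> real" where
  "ptilde_neg pip pp pn x =
     pip^2 / (pip^2 + (1 - pip)) * pp x + (1 - pip) / (pip^2 + (1 - pip)) * pn x"

definition risk_PC :: "'a measure \<Rightarrow> real \<Rightarrow> ('a \<Rightarrow> real) \<Rightarrow> ('a \<Rightarrow> real)
    \<Rightarrow> (real \<Rightarrow> int \<Rightarrow> real) \<Rightarrow> ('a \<Rightarrow> real) \<Rightarrow> real" where
  "risk_PC M pip pp pn l f =
     expect_dens M (ptilde_pos pip pp pn) (\<lambda>x. l (f x) 1 - pip * l (f x) (-1))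
   + expect_dens M (ptilde_neg pip pp pn) (\<lambda>x. l (f x) (-1) - (1 - pip) * l (f x) 1)"

end

theory Submission
  imports Defs
begin

theorem theorem3:
  fixes M :: "'a measure" and pip :: real and pp pn :: "'a \<Rightarrow> real"
    and l :: "real \<Rightarrow> int \<Rightarrow> real" and f :: "'a \<Rightarrow> real"
  assumes "0 < pip" and "pip < 1"
    and "is_density M pp" and "is_density M pn"
    and "\<And>z y. 0 \<le> l z y"
    and "integrable M (\<lambda>x. pp x * l (f x) 1)" and "integrable M (\<lambda>x. pp x * l (f x) (-1))"
    and "integrable M (\<lambda>x. pn x * l (f x) 1)" and "integrable M (\<lambda>x. pn x * l (f x) (-1))"
  shows "risk M pip pp pn l f = risk_PC M pip pp pn l f"
proof -
  let ?a = pip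
  define D where "D = 1 - pip + pip^2"
  have D: "D > 0" using assms(1,2) unfolding D_def
    by (smt (verit) mult_pos_pos power2_eq_square)
  have d1: "(1 - pip)^2 + pip = D" "pip^2 + (1 - pip) = D" unfolding D_def
    by (simp_all add: power2_eq_square algebra_simps)
  define A1 where "A1 = (\<integral>x. pp x * l (f x) 1 \<partial>M)"
  define A2 where "A2 = (\<integral>x. pp x * l (f x) (-1) \<partial>M)"
  define B1 where "B1 = (\<integral>x. pn x * l (f x) 1 \<partial>M)"
  define B2 where "B2 = (\<integral>x. pn x * l (f x) (-1) \<partial>M)"
  note I = assms(6-9)
  have e1: "(\<lambda>x. ptilde_pos pip pp pn x * (l (f x) 1 - pip * l (f x) (-1))) =
    (\<lambda>x. ((pip/D) * (pp x * l (f x) 1) - (pip/D*pip) * (pp x * l (f x) (-1)))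
       + (((1-pip)^2/D) * (pn x * l (f x) 1) - ((1-pip)^2/D*pip) * (pn x * l (f x) (-1))))"
    using D by (intro ext) (unfold ptilde_pos_def d1, simp add: field_simps)
  have e2: "(\<lambda>x. ptilde_neg pip pp pn x * (l (f x) (-1) - (1-pip) * l (f x) 1)) =
    (\<lambda>x. ((pip^2/D) * (pp x * l (f x) (-1)) - (pip^2/D*(1-pip)) * (pp x * l (f x) 1))
       + (((1-pip)/D) * (pn x * l (f x) (-1)) - ((1-pip)/D*(1-pip)) * (pn x * l (f x) 1)))"
    using D by (intro ext) (unfold ptilde_neg_def d1, simp add: field_simps)
  have r1: "expect_dens M (ptilde_pos pip pp pn) (\<lambda>x. l (f x) 1 - pip * l (f x) (-1))
     = (pip/D) * A1 - (pip/D*pip) * A2 + (((1-pip)^2/D) * B1 - ((1-pip)^2/D*pip) * B2)"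
    unfolding expect_dens_def e1 A1_def A2_def B1_def B2_def
    using I by (simp add: integral_add integral_diff)
  have r2: "expect_dens M (ptilde_neg pip pp pn) (\<lambda>x. l (f x) (-1) - (1-pip) * l (f x) 1)
     = (pip^2/D) * A2 - (pip^2/D*(1-pip)) * A1 + (((1-pip)/D) * B2 - ((1-pip)/D*(1-pip)) * B1)"
    unfolding expect_dens_def e2 A1_def A2_def B1_def B2_def
    using I by (simp add: integral_add integral_diff)
  have "risk M pip pp pn l f = pip * A1 + (1 - pip) * B2"
    unfolding risk_def expect_dens_def A1_def B2_def ..
  also have "\<dots> = risk_PC M pip pp pn l f"
  proof -
    have "D \<noteq> 0" using D by simp
    then show ?thesis
      unfolding risk_PC_def r1 r2
      by (simp add: divide_simps) (simp add: D_def power2_eq_square algebra_simps)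
  qed
  finally show ?thesis .
qed

end
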